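(* Let $m,n,k$ be positive integers. If $\vartheta\big(\overline{G_D(K_{m,n})}\big) > k$ for every circular drawing $D$ of $K_{m,n}$, then $\nu_k(K_{m,n})>0$.
   Context: A circular drawing $D$ of $K_{m,n}$ places the $m+n$ vertices at distinct points of a circle and draws each edge as the straight chord between its endpoints. The auxiliary graph $G_D(K_{m,n})$ has as vertex set the edge set of $K_{m,n}$, two vertices being adjacent iff the corresponding chords cross in $D$. $\overline{H}$ denotes the complement of a graph $H$. For a graph $G=(V,E)$, the Lovász number is $\vartheta(G):=\max\{\sum_{i,j\in V}X_{ij} : X\in\mathbb{R}^{V\times V}\text{ positive semidefinite},\ X_{ij}=0 \text{ for } \{i,j\}\in E,\ \mathrm{trace}(X)=1\}$. A book with $k$ pages consists of a line (the spine) and $k$ half-planes (pages) bounded by it; a $k$-page drawing places vertices on the spine and each edge in a single page; $\nu_k(G)$ is the minimum number of crossings over all $k$-page drawings of $G$. *)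

theory Defs
  imports "HOL-Analysis.Analysis"
begin

text \<open>Vertices: Inl i (i < m) on one side, Inr j (j < n) on the other.
  The edge (i,j) joins Inl i and Inr j.\<close>

definition Kmn_vertices :: "nat \<Rightarrow> nat \<Rightarrow> (nat + nat) set" where
  "Kmn_vertices m n = Inl ` {..<m} \<union> Inr ` {..<n}"

definition Kmn_edges :: "nat \<Rightarrow> nat \<Rightarrow> (nat \<times> nat) set" where
  "Kmn_edges m n = {..<m} \<times> {..<n}"

definition share_endpoint :: "nat \<times> nat \<Rightarrow> nat \<times> nat \<Rightarrow> bool" where
  "share_endpoint e f \<longleftrightarrow> fst e = fst f \<or> snd e = snd f"

definition circular_drawing :: "nat \<Rightarrow> nat \<Rightarrow> (nat + nat \<Rightarrow> complex) \<Rightarrow> bool" where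
  "circular_drawing m n D \<longleftrightarrow>
     inj_on D (Kmn_vertices m n) \<and> D ` Kmn_vertices m n \<subseteq> sphere 0 1"

definition chord :: "(nat + nat \<Rightarrow> complex) \<Rightarrow> nat \<times> nat \<Rightarrow> complex set" where
  "chord D e = closed_segment (D (Inl (fst e))) (D (Inr (snd e)))"

text \<open>Two chords cross iff they have no common endpoint and the segments meet
  (for chords with four distinct endpoints on a circle, any common point is an
  interior crossing point).\<close>

definition chords_cross :: "(nat + nat \<Rightarrow> complex) \<Rightarrow> nat \<times> nat \<Rightarrow> nat \<times> nat \<Rightarrow> bool" where
  "chords_cross D e f \<longleftrightarrow> \<not> share_endpoint e f \<and> chord D e \<inter> chord D f \<noteq> {}"

text \<open>G_D(K_{m,n}) has vertex set Kmn_edges m n and adjacency chords_cross D.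
  Its complement has the same vertex set and adjacency below.\<close>

definition GD_adj :: "(nat + nat \<Rightarrow> complex) \<Rightarrow> nat \<times> nat \<Rightarrow> nat \<times> nat \<Rightarrow> bool" where
  "GD_adj D e f \<longleftrightarrow> chords_cross D e f"

definition complement_adj :: "('a \<Rightarrow> 'a \<Rightarrow> bool) \<Rightarrow> 'a \<Rightarrow> 'a \<Rightarrow> bool" where
  "complement_adj adj x y \<longleftrightarrow> x \<noteq> y \<and> \<not> adj x y"

definition psd_on :: "'a set \<Rightarrow> ('a \<Rightarrow> 'a \<Rightarrow> real) \<Rightarrow> bool" where
  "psd_on S X \<longleftrightarrow> (\<forall>i\<in>S. \<forall>j\<in>S. X i j = X j i) \<and>
     (\<forall>v :: 'a \<Rightarrow> real. 0 \<le> (\<Sum>i\<in>S. \<Sum>j\<in>S. v i * X i j * v j))"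

definition lovasz_theta :: "'a set \<Rightarrow> ('a \<Rightarrow> 'a \<Rightarrow> bool) \<Rightarrow> real" where
  "lovasz_theta S adj = Sup {(\<Sum>i\<in>S. \<Sum>j\<in>S. X i j) | X.
      psd_on S X \<and> (\<forall>i\<in>S. \<forall>j\<in>S. adj i j \<longrightarrow> X i j = 0) \<and> (\<Sum>i\<in>S. X i i) = 1}"

text \<open>A k-page drawing: an injective placement s of the vertices on the spine (a line)
  and an assignment pg of each edge to one of the pages 0..k-1.  As usual, two edges
  in the same page cross iff their endpoints interleave along the spine (this is the
  minimal number of crossings realisable for the given spine order and page
  assignment).\<close>

definition book_drawing :: "nat \<Rightarrow> nat \<Rightarrow> nat \<Rightarrow> (nat + nat \<Rightarrow> real) \<Rightarrow> (nat \<times> nat \<Rightarrow> nat) \<Rightarrow> bool" where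
  "book_drawing k m n s pg \<longleftrightarrow>
     inj_on s (Kmn_vertices m n) \<and> pg ` Kmn_edges m n \<subseteq> {..<k}"

definition strictly_between :: "(nat + nat \<Rightarrow> real) \<Rightarrow> nat + nat \<Rightarrow> nat + nat \<Rightarrow> nat + nat \<Rightarrow> bool" where
  "strictly_between s a b x \<longleftrightarrow> min (s a) (s b) < s x \<and> s x < max (s a) (s b)"

definition book_cross :: "(nat + nat \<Rightarrow> real) \<Rightarrow> (nat \<times> nat \<Rightarrow> nat) \<Rightarrow> nat \<times> nat \<Rightarrow> nat \<times> nat \<Rightarrow> bool" where
  "book_cross s pg e f \<longleftrightarrow> pg e = pg f \<and> \<not> share_endpoint e f \<and>
     (strictly_between s (Inl (fst e)) (Inr (snd e)) (Inl (fst f)) \<noteq>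
      strictly_between s (Inl (fst e)) (Inr (snd e)) (Inr (snd f)))"

definition book_crossings :: "nat \<Rightarrow> nat \<Rightarrow> (nat + nat \<Rightarrow> real) \<Rightarrow> (nat \<times> nat \<Rightarrow> nat) \<Rightarrow> nat" where
  "book_crossings m n s pg =
     card {{e, f} | e f. e \<in> Kmn_edges m n \<and> f \<in> Kmn_edges m n \<and> book_cross s pg e f}"

definition nu_Kmn :: "nat \<Rightarrow> nat \<Rightarrow> nat \<Rightarrow> nat" where
  "nu_Kmn k m n = (LEAST c. \<exists>s pg. book_drawing k m n s pg \<and> book_crossings m n s pg = c)"

end

theory Submission
  imports Defs
begin

lemma phi_cis: "Re (cis t * cis (-\<mu>)) = cos (t - \<mu>)"
  by (simp add: cis_mult)

lemma phi_seg:
  assumes "z \<in> closed_segment p q"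
  shows "\<exists>u. 0 \<le> u \<and> u \<le> 1 \<and> Re (z * w) = (1 - u) * Re (p * w) + u * Re (q * w)"
proof -
  obtain u where u: "0 \<le> u" "u \<le> 1" "z = (1 - u) *\<^sub>R p + u *\<^sub>R q"
    using assms in_segment(1) by blast
  have "Re (z * w) = (1 - u) * Re (p * w) + u * Re (q * w)"
    unfolding u(3) by (simp add: scaleR_conv_of_real algebra_simps)
  thus ?thesis using u by blast
qed

lemma cos_out:
  assumes "t \<in> {-pi/2<..<pi/2}" "c \<in> {-pi/2<..<pi/2}" "d \<in> {-pi/2<..<pi/2}" "c < d" "t \<notin> {c..d}"
  shows "cos (t - (c+d)/2) < cos ((d-c)/2)"
proof -
  have "cos (t - (c+d)/2) = cos \<bar>t - (c+d)/2\<bar>" by (rule cos_abs_real[symmetric])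
  also have "\<dots> < cos ((d-c)/2)"
  proof (rule cos_monotone_0_pi)
    show "0 \<le> (d-c)/2" using assms by simp
    show "(d-c)/2 < \<bar>t - (c+d)/2\<bar>" using assms(4,5) by (auto simp: abs_real_def field_simps)
    show "\<bar>t - (c+d)/2\<bar> \<le> pi" using assms(1-3) by (auto simp: abs_real_def field_simps)
  qed
  finally show ?thesis .
qed

lemma chord_disj:
  assumes "a \<in> {-pi/2<..<pi/2}" "b \<in> {-pi/2<..<pi/2}" "c \<in> {-pi/2<..<pi/2}" "d \<in> {-pi/2<..<pi/2}"
    "c < d" "a \<notin> {c..d}" "b \<notin> {c..d}"
  shows "closed_segment (cis a) (cis b) \<inter> closed_segment (cis c) (cis d) = {}"
proof (rule ccontr)
  assume "\<not> ?thesis"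
  then obtain z where z1: "z \<in> closed_segment (cis a) (cis b)" and z2: "z \<in> closed_segment (cis c) (cis d)" by blast
  define w where "w = cis (- ((c+d)/2))"
  define h where "h = cos ((d-c)/2)"
  have pa: "Re (cis a * w) < h" unfolding w_def h_def phi_cis using cos_out assms by blast
  have pb: "Re (cis b * w) < h" unfolding w_def h_def phi_cis using cos_out assms by blast
  have pc: "Re (cis c * w) = h" unfolding w_def h_def phi_cis
  proof -
    have "c - (c+d)/2 = -((d-c)/2)" by (simp add: field_simps)
    thus "cos (c - (c+d)/2) = cos ((d-c)/2)" by simp
  qed
  have pd: "Re (cis d * w) = h" unfolding w_def h_def phi_cis
  proof -
    have e: "d - (c+d)/2 = (d-c)/2" by (simp add: field_simps)
    show "cos (d - (c+d)/2) = cos ((d-c)/2)" by (simp only: e)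
  qed
  obtain u where u: "0 \<le> u" "u \<le> 1" "Re (z * w) = (1 - u) * Re (cis a * w) + u * Re (cis b * w)"
    using phi_seg[OF z1] by blast
  obtain v where v: "0 \<le> v" "v \<le> 1" "Re (z * w) = (1 - v) * Re (cis c * w) + v * Re (cis d * w)"
    using phi_seg[OF z2] by blast
  have "Re (z * w) = h" using v pc pd by (simp add: algebra_simps)
  moreover have "Re (z * w) < h"
  proof -
    have "(1 - u) * Re (cis a * w) \<le> (1-u) * h" using u pa by (intro mult_left_mono) auto
    moreover have "u * Re (cis b * w) \<le> u * h" using u pb by (intro mult_left_mono) auto
    moreover have "(1 - u) * Re (cis a * w) < (1-u) * h \<or> u * Re (cis b * w) < u * h"
      using u pa pb by (cases "u = 1") auto
    ultimately show ?thesis using u(3) by (simp add: algebra_simps) linarith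
  qed
  ultimately show False by simp
qed

lemma inner_t:
  fixes k :: nat and a b :: nat
  assumes "a < k" "b < k"
  shows "(\<Sum>t<k. (1 - real k * of_bool (a = t)) * (1 - real k * of_bool (b = t)))
       = real k * real k * of_bool (a = b) - real k"
proof -
  have e: "\<And>t. (1 - real k * of_bool (a = t)) * (1 - real k * of_bool (b = t))
      = 1 - real k * of_bool (a = t) - real k * of_bool (b = t) + real k * real k * of_bool (a = t \<and> b = t)"
    by (auto simp: algebra_simps)
  have s1: "(\<Sum>t<k. of_bool (a = t) :: real) = 1" using assms by (simp add: sum.delta)
  have s2: "(\<Sum>t<k. of_bool (b = t) :: real) = 1" using assms by (simp add: sum.delta)
  have s3: "(\<Sum>t<k. of_bool (a = t \<and> b = t) :: real) = of_bool (a = b)"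
  proof (cases "a = b")
    case True thus ?thesis using assms by (simp add: sum.delta)
  next
    case False
    have "(\<Sum>t<k. of_bool (a = t \<and> b = t) :: real) = 0"
      by (rule sum.neutral) (use False in auto)
    thus ?thesis using False by simp
  qed
  show ?thesis unfolding e sum.distrib sum_subtractf sum_distrib_left[symmetric] s1 s2 s3
    by simp
qed

lemma feasible_bound:
  fixes S :: "'a set" and c :: "'a \<Rightarrow> nat"
  assumes fin: "finite S" and k: "0 < k" and col: "\<forall>i\<in>S. c i < k"
    and ind: "\<forall>i\<in>S. \<forall>j\<in>S. i \<noteq> j \<and> c i = c j \<longrightarrow> adj i j"
    and psd: "psd_on S X" and z: "\<forall>i\<in>S. \<forall>j\<in>S. adj i j \<longrightarrow> X i j = 0"
    and tr: "(\<Sum>i\<in>S. X i i) = 1"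
  shows "(\<Sum>i\<in>S. \<Sum>j\<in>S. X i j) \<le> real k"
proof -
  define v where "v t i = 1 - real k * of_bool (c i = t)" for t i
  have q: "0 \<le> (\<Sum>i\<in>S. \<Sum>j\<in>S. v t i * X i j * v t j)" for t
    using psd unfolding psd_on_def by blast
  have "0 \<le> (\<Sum>t<k. \<Sum>i\<in>S. \<Sum>j\<in>S. v t i * X i j * v t j)"
    by (rule sum_nonneg) (rule q)
  also have "\<dots> = (\<Sum>i\<in>S. \<Sum>j\<in>S. \<Sum>t<k. v t i * X i j * v t j)"
    by (simp add: sum.swap[of _ "{..<k}"] sum.swap[of _ "{..<k}" S])
  also have "\<dots> = (\<Sum>i\<in>S. \<Sum>j\<in>S. X i j * (real k * real k * of_bool (c i = c j) - real k))"
  proof (intro sum.cong refl)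
    fix i j assume "i \<in> S" "j \<in> S"
    have "(\<Sum>t<k. v t i * X i j * v t j) = X i j * (\<Sum>t<k. v t i * v t j)"
      by (simp add: sum_distrib_left algebra_simps)
    also have "\<dots> = X i j * (real k * real k * of_bool (c i = c j) - real k)"
      unfolding v_def using inner_t col \<open>i \<in> S\<close> \<open>j \<in> S\<close> by simp
    finally show "(\<Sum>t<k. v t i * X i j * v t j) = X i j * (real k * real k * of_bool (c i = c j) - real k)" .
  qed
  also have "\<dots> = real k * real k * (\<Sum>i\<in>S. \<Sum>j\<in>S. X i j * of_bool (c i = c j))
       - real k * (\<Sum>i\<in>S. \<Sum>j\<in>S. X i j)"
    by (simp add: sum_distrib_left sum_subtractf algebra_simps)
  also have "(\<Sum>i\<in>S. \<Sum>j\<in>S. X i j * of_bool (c i = c j)) = (\<Sum>i\<in>S. X i i)"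
  proof (intro sum.cong refl)
    fix i assume i: "i \<in> S"
    have "(\<Sum>j\<in>S. X i j * of_bool (c i = c j)) = (\<Sum>j\<in>S. if j = i then X i i else 0)"
    proof (intro sum.cong refl)
      fix j assume j: "j \<in> S"
      show "X i j * of_bool (c i = c j) = (if j = i then X i i else 0)"
        using ind z i j by auto
    qed
    also have "\<dots> = X i i" using fin i by (simp add: sum.delta')
    finally show "(\<Sum>j\<in>S. X i j * of_bool (c i = c j)) = X i i" .
  qed
  finally have "0 \<le> real k * real k - real k * (\<Sum>i\<in>S. \<Sum>j\<in>S. X i j)" using tr by simp
  hence "real k * (\<Sum>i\<in>S. \<Sum>j\<in>S. X i j) \<le> real k * real k" by simp
  thus ?thesis using k by simp
qed

lemma theta_bound:
  fixes S :: "'a set" and c :: "'a \<Rightarrow> nat"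
  assumes fin: "finite S" and ne: "S \<noteq> {}" and k: "0 < k" and col: "\<forall>i\<in>S. c i < k"
    and ind: "\<forall>i\<in>S. \<forall>j\<in>S. i \<noteq> j \<and> c i = c j \<longrightarrow> adj i j"
    and irr: "\<forall>i\<in>S. \<not> adj i i"
  shows "lovasz_theta S adj \<le> real k"
  unfolding lovasz_theta_def
proof (rule cSup_least)
  define X0 where "X0 i j = (if i = j then 1 / real (card S) else 0)" for i j :: 'a
  have cS: "card S > 0" using fin ne by (simp add: card_gt_0_iff)
  have "psd_on S X0"
    unfolding psd_on_def
  proof (intro conjI ballI allI)
    fix i j assume "i \<in> S" "j \<in> S" thus "X0 i j = X0 j i" by (simp add: X0_def)
  next
    fix v :: "'a \<Rightarrow> real"
    have "(\<Sum>i\<in>S. \<Sum>j\<in>S. v i * X0 i j * v j) = (\<Sum>i\<in>S. v i * v i / real (card S))"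
    proof (intro sum.cong refl)
      fix i assume i: "i \<in> S"
      have "(\<Sum>j\<in>S. v i * X0 i j * v j) = (\<Sum>j\<in>S. if j = i then v i * v i / real (card S) else 0)"
        by (intro sum.cong refl) (auto simp: X0_def)
      also have "\<dots> = v i * v i / real (card S)" using fin i by (simp add: sum.delta')
      finally show "(\<Sum>j\<in>S. v i * X0 i j * v j) = v i * v i / real (card S)" .
    qed
    also have "\<dots> \<ge> 0" by (intro sum_nonneg) simp
    finally show "0 \<le> (\<Sum>i\<in>S. \<Sum>j\<in>S. v i * X0 i j * v j)" .
  qed
  moreover have "\<forall>i\<in>S. \<forall>j\<in>S. adj i j \<longrightarrow> X0 i j = 0"
    using irr by (auto simp: X0_def)
  moreover have "(\<Sum>i\<in>S. X0 i i) = 1" using cS by (simp add: X0_def)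
  ultimately show "{(\<Sum>i\<in>S. \<Sum>j\<in>S. X i j) | X.
      psd_on S X \<and> (\<forall>i\<in>S. \<forall>j\<in>S. adj i j \<longrightarrow> X i j = 0) \<and> (\<Sum>i\<in>S. X i i) = 1} \<noteq> {}"
    by blast
next
  fix x assume "x \<in> {(\<Sum>i\<in>S. \<Sum>j\<in>S. X i j) | X.
      psd_on S X \<and> (\<forall>i\<in>S. \<forall>j\<in>S. adj i j \<longrightarrow> X i j = 0) \<and> (\<Sum>i\<in>S. X i i) = 1}"
  then obtain X where "x = (\<Sum>i\<in>S. \<Sum>j\<in>S. X i j)" "psd_on S X"
    "\<forall>i\<in>S. \<forall>j\<in>S. adj i j \<longrightarrow> X i j = 0" "(\<Sum>i\<in>S. X i i) = 1" by blast
  thus "x \<le> real k" using feasible_bound[OF fin k col ind] by blast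
qed
lemma seg_minmax: "closed_segment (cis (min x y)) (cis (max x y)) = closed_segment (cis x) (cis y)"
  by (cases "x \<le> y") (auto simp: min_def max_def closed_segment_commute)

lemma key_ang:
  assumes "a \<in> {-pi/2<..<pi/2}" "b \<in> {-pi/2<..<pi/2}" "c \<in> {-pi/2<..<pi/2}" "d \<in> {-pi/2<..<pi/2}"
    "a \<noteq> c" "a \<noteq> d" "b \<noteq> c" "b \<noteq> d" "a \<noteq> b" "c \<noteq> d"
    "(min a b < c \<and> c < max a b) = (min a b < d \<and> d < max a b)"
  shows "closed_segment (cis a) (cis b) \<inter> closed_segment (cis c) (cis d) = {}"
proof (cases "min a b < c \<and> c < max a b")
  case True
  have "closed_segment (cis a) (cis b) \<inter> closed_segment (cis (min c d)) (cis (max c d)) = {}"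
    apply (rule chord_disj)
    using assms True by (auto simp: min_def max_def split: if_splits)
  thus ?thesis by (simp add: seg_minmax)
next
  case False
  have "closed_segment (cis c) (cis d) \<inter> closed_segment (cis (min a b)) (cis (max a b)) = {}"
    apply (rule chord_disj)
    using assms False by (auto simp: min_def max_def split: if_splits)
  thus ?thesis by (auto simp: seg_minmax)
qed

lemma key_real:
  fixes p q r t :: real
  assumes "p \<noteq> r" "p \<noteq> t" "q \<noteq> r" "q \<noteq> t" "p \<noteq> q" "r \<noteq> t"
    "(min p q < r \<and> r < max p q) = (min p q < t \<and> t < max p q)"
  shows "closed_segment (cis (arctan p)) (cis (arctan q)) \<inter> closed_segment (cis (arctan r)) (cis (arctan t)) = {}"
proof (rule key_ang)
  have r: "arctan x \<in> {-pi/2<..<pi/2}" for x using arctan_lbound[of x] arctan_ubound[of x] by auto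
  show "arctan p \<in> {-pi/2<..<pi/2}" "arctan q \<in> {-pi/2<..<pi/2}" "arctan r \<in> {-pi/2<..<pi/2}"
    "arctan t \<in> {-pi/2<..<pi/2}" using r by blast+
  show "arctan p \<noteq> arctan r" "arctan p \<noteq> arctan t" "arctan q \<noteq> arctan r"
    "arctan q \<noteq> arctan t" "arctan p \<noteq> arctan q" "arctan r \<noteq> arctan t"
    using assms by (auto simp: arctan_eq_iff)
  show "(min (arctan p) (arctan q) < arctan r \<and> arctan r < max (arctan p) (arctan q)) =
    (min (arctan p) (arctan q) < arctan t \<and> arctan t < max (arctan p) (arctan q))"
    using assms(7) by (auto simp: min_def max_def arctan_less_iff arctan_le_iff split: if_splits)
qed

lemma cis_arctan_inj: "cis (arctan x) = cis (arctan y) \<Longrightarrow> x = y"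
proof -
  assume h: "cis (arctan x) = cis (arctan y)"
  have g: "z = Im (cis (arctan z)) / Re (cis (arctan z))" for z
  proof -
    have "z = tan (arctan z)" by (rule tan_arctan[symmetric])
    also have "\<dots> = sin (arctan z) / cos (arctan z)" by (simp add: tan_def)
    finally show ?thesis by simp
  qed
  have "x = Im (cis (arctan x)) / Re (cis (arctan x))" by (rule g)
  also have "\<dots> = y" using h g[of y] by simp
  finally show ?thesis .
qed

theorem corollary11:
  fixes m n k :: nat
  assumes "0 < m" and "0 < n" and "0 < k"
    and "\<forall>D. circular_drawing m n D \<longrightarrow>
           lovasz_theta (Kmn_edges m n) (complement_adj (GD_adj D)) > real k"
  shows "nu_Kmn k m n > 0"
proof (rule ccontr)
  assume "\<not> nu_Kmn k m n > 0"
  hence nu0: "nu_Kmn k m n = 0" by simp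
  define s0 :: "nat + nat \<Rightarrow> real" where "s0 x = real (case x of Inl i \<Rightarrow> 2*i | Inr j \<Rightarrow> 2*j+1)" for x
  have "inj_on s0 (Kmn_vertices m n)"
    unfolding inj_on_def s0_def of_nat_eq_iff by (auto split: sum.splits) presburger+
  hence "book_drawing k m n s0 (\<lambda>_. 0)" using assms(3) by (auto simp: book_drawing_def)
  hence ex: "\<exists>c. \<exists>s pg. book_drawing k m n s pg \<and> book_crossings m n s pg = c" by blast
  obtain s pg where bd: "book_drawing k m n s pg" and bc: "book_crossings m n s pg = 0"
    using LeastI_ex[OF ex] nu0 unfolding nu_Kmn_def by auto
  let ?E = "Kmn_edges m n"
  have finE: "finite ?E" by (simp add: Kmn_edges_def)
  have "finite {{e, f} | e f. e \<in> ?E \<and> f \<in> ?E \<and> book_cross s pg e f}"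
    by (rule finite_subset[of _ "(\<lambda>(e,f). {e,f}) ` (?E \<times> ?E)"]) (use finE in auto)
  hence nocross: "\<And>e f. e \<in> ?E \<Longrightarrow> f \<in> ?E \<Longrightarrow> \<not> book_cross s pg e f"
    using bc unfolding book_crossings_def by auto
  define D where "D v = cis (arctan (s v))" for v
  have inj: "inj_on s (Kmn_vertices m n)" using bd by (simp add: book_drawing_def)
  have cd: "circular_drawing m n D"
    unfolding circular_drawing_def
  proof
    show "inj_on D (Kmn_vertices m n)"
      using inj unfolding inj_on_def D_def by (auto dest: cis_arctan_inj)
    show "D ` Kmn_vertices m n \<subseteq> sphere 0 1" by (auto simp: D_def)
  qed
  have diff: "pg e \<noteq> pg f" if e: "e \<in> ?E" and f: "f \<in> ?E" and cr: "chords_cross D e f" for e f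
  proof
    assume same: "pg e = pg f"
    obtain a b where ab: "e = (a, b)" "a < m" "b < n" using e by (auto simp: Kmn_edges_def)
    obtain c d where cd': "f = (c, d)" "c < m" "d < n" using f by (auto simp: Kmn_edges_def)
    have ns: "a \<noteq> c" "b \<noteq> d" using cr ab cd' by (auto simp: chords_cross_def share_endpoint_def)
    have V: "Inl a \<in> Kmn_vertices m n" "Inr b \<in> Kmn_vertices m n" "Inl c \<in> Kmn_vertices m n" "Inr d \<in> Kmn_vertices m n"
      using ab cd' by (auto simp: Kmn_vertices_def)
    have ne: "s (Inl a) \<noteq> s (Inl c)" "s (Inl a) \<noteq> s (Inr d)" "s (Inr b) \<noteq> s (Inl c)"
      "s (Inr b) \<noteq> s (Inr d)" "s (Inl a) \<noteq> s (Inr b)" "s (Inl c) \<noteq> s (Inr d)"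
      using inj V ns unfolding inj_on_def by blast+
    have "\<not> book_cross s pg e f" using nocross e f .
    hence cond: "(min (s (Inl a)) (s (Inr b)) < s (Inl c) \<and> s (Inl c) < max (s (Inl a)) (s (Inr b))) =
      (min (s (Inl a)) (s (Inr b)) < s (Inr d) \<and> s (Inr d) < max (s (Inl a)) (s (Inr b)))"
      using same ab cd' ns by (auto simp: book_cross_def share_endpoint_def strictly_between_def)
    have "chord D e \<inter> chord D f = {}"
      unfolding chord_def D_def ab cd' fst_conv snd_conv
      by (rule key_real[OF ne cond])
    thus False using cr by (simp add: chords_cross_def)
  qed
  have "lovasz_theta ?E (complement_adj (GD_adj D)) \<le> real k"
  proof (rule theta_bound[where c = pg])
    show "finite ?E" by (rule finE)
    show "?E \<noteq> {}" using assms(1,2) by (auto simp: Kmn_edges_def)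
    show "0 < k" by (rule assms(3))
    show "\<forall>i\<in>?E. pg i < k" using bd by (auto simp: book_drawing_def)
    show "\<forall>i\<in>?E. \<forall>j\<in>?E. i \<noteq> j \<and> pg i = pg j \<longrightarrow> complement_adj (GD_adj D) i j"
      using diff by (auto simp: complement_adj_def GD_adj_def)
    show "\<forall>i\<in>?E. \<not> complement_adj (GD_adj D) i i" by (simp add: complement_adj_def)
  qed
  thus False using assms(4) cd by force
qed

end
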